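(* Let $X$ be any real random variable, and let $s_1,s_2$ be real numbers with $s_1\le 0\le s_2$ such that $\mathsf{E}\, e^{sX}<\infty$ for all $s\in[s_1,s_2]$. Let $p>0$ and $\ell:=\lceil p-1\rceil$. Then for any $s\in(0,s_2]$ and any $j\in\{-1,0,1,\dots,\ell\}$ such that $\mathsf{E}|X|^{j_+}<\infty$ (with $j_+=\max(j,0)$ and the convention $0^0:=1$), one has \[ \mathsf{E}\, X_+^p=\frac{\Gamma(p+1)}{2\pi}\int_{-\infty}^{\infty}\frac{\mathsf{E}\, e_j\big((s+it)X\big)}{(s+it)^{p+1}}\,dt =\frac{\Gamma(p+1)}{\pi}\int_{0}^{\infty}\operatorname{Re}\frac{\mathsf{E}\, e_j\big((s+it)X\big)}{(s+it)^{p+1}}\,dt, \] where both integrals exist in the Lebesgue sense.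
   Context: $x_+:=\max(0,x)$ and $x_+^p:=(x_+)^p$. For complex $z$ and $m\in\{-1,0,1,\dots\}$, $e_m(z):=e^z-\sum_{j=0}^m z^j/j!$ (an empty sum is $0$, so $e_{-1}(z)=e^z$). For $z$ with $\operatorname{Re} z>0$, $z^{p+1}$ denotes the principal branch $\exp((p+1)\operatorname{Log} z)$. The statement "the identity holds" includes the assertion that the integrals exist in the Lebesgue sense (possibly infinite). *)

theory Defs
  imports "HOL-Probability.Probability"
begin

definition exp_trunc :: "int \<Rightarrow> complex \<Rightarrow> complex" where
  "exp_trunc m z = exp z - (\<Sum>k<nat (m + 1). z ^ k / of_nat (fact k))"

end

theory Submission
  imports Defs "HOL-Analysis.Generalised_Binomial_Theorem"
begin

lemma gamma_scaled_real:
  fixes b c :: real assumes b: "b > 0" and c: "c > 0"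
  shows "integrable lborel (\<lambda>y. max 0 y powr (b - 1) * exp (- c * y))"
    and "(LINT y|lborel. max 0 y powr (b - 1) * exp (- c * y)) = Gamma b / c powr b"
proof -
  define g where "g = (\<lambda>t::real. indicator {0..} t * t powr (b - 1) / exp t)"
  have gm[measurable]: "g \<in> borel_measurable borel" unfolding g_def by measurable
  have "(\<integral>\<^sup>+t. ennreal (g t) \<partial>lborel) = ennreal (Gamma b)"
    using Gamma_conv_nn_integral_real[OF b] unfolding g_def by simp
  then have gi: "integrable lborel g" and gI: "integral\<^sup>L lborel g = Gamma b"
    using nn_integral_eq_integrable[of g lborel "Gamma b"] b
    by (auto simp: g_def intro!: Gamma_real_pos less_imp_le)
  have eq: "g (0 + c * y) = c powr (b - 1) * (max 0 y powr (b - 1) * exp (- c * y))" for y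
  proof (cases "y \<ge> 0")
    case True
    then show ?thesis using c by (simp add: g_def powr_mult exp_minus field_simps max_def)
  next
    case False
    then show ?thesis using c by (simp add: g_def max_def indicator_def zero_le_mult_iff)
  qed
  have "integrable lborel (\<lambda>y. g (0 + c * y))"
    using lborel_integrable_real_affine[OF gi, of c 0] c by simp
  then have "integrable lborel (\<lambda>y. c powr (b - 1) * (max 0 y powr (b - 1) * exp (- c * y)))"
    unfolding eq .
  then have "integrable lborel (\<lambda>y. inverse (c powr (b - 1)) * (c powr (b - 1) * (max 0 y powr (b - 1) * exp (- c * y))))"
    by (rule integrable_mult_right)
  then show "integrable lborel (\<lambda>y. max 0 y powr (b - 1) * exp (- c * y))"
    using c by simp
  have "Gamma b = c * (LINT y|lborel. c powr (b - 1) * (max 0 y powr (b - 1) * exp (- c * y)))"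
    using lborel_integral_real_affine[of c g 0] c gI unfolding eq by simp
  also have "\<dots> = (c * c powr (b - 1)) * (LINT y|lborel. max 0 y powr (b - 1) * exp (- c * y))"
    by (simp only: integral_mult_right_zero mult.assoc)
  also have "c * c powr (b - 1) = c powr b"
    using c by (simp add: powr_diff)
  finally show "(LINT y|lborel. max 0 y powr (b - 1) * exp (- c * y)) = Gamma b / c powr b"
    using c by (simp add: field_simps)
qed

lemma maxpow_mult_pow:
  fixes y a :: real assumes "a > 0"
  shows "max 0 y powr (a - 1) * \<bar>y\<bar> ^ n = max 0 y powr (a + real n - 1)"
proof (cases "y > 0")
  case True
  then have "max 0 y powr (a - 1) * \<bar>y\<bar> ^ n = y powr (a - 1) * y powr real n"
    by (simp add: powr_realpow max_def)
  also have "\<dots> = y powr (a - 1 + real n)" by (rule powr_add[symmetric])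
  finally show ?thesis using True by (simp add: max_def algebra_simps)
next
  case False
  then show ?thesis by (cases n) (auto simp: max_def)
qed

lemma laplace_complex:
  fixes a :: real and w :: complex
  assumes a: "a > 0" and w: "Re w > 0"
  shows "integrable lborel (\<lambda>y. of_real (max 0 y powr (a - 1)) * exp (- (w * of_real y)))"
    and "(LINT y|lborel. of_real (max 0 y powr (a - 1)) * exp (- (w * of_real y)))
           = of_real (Gamma a) / w powr of_real a"
proof -
  define c where "c = (cmod w)^2 / Re w"
  define d where "d = w - of_real c"
  define r where "r = cmod d"
  have wnz: "w \<noteq> 0" using w by auto
  have c: "c > 0" using w wnz unfolding c_def by auto
  have e1: "r^2 = (Re w - c)^2 + (Im w)^2" unfolding r_def d_def by (simp add: cmod_power2)
  have e2: "(cmod w)^2 = (Re w)^2 + (Im w)^2" by (simp add: cmod_power2)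
  have e3: "c * Re w = (cmod w)^2" using w unfolding c_def by simp
  have "r^2 = c^2 - (cmod w)^2"
    unfolding e1 using e2 e3 by (simp add: power2_diff algebra_simps)
  then have "r^2 < c^2" using wnz by simp
  then have rc: "r < c" using c by (meson less_imp_le power_less_imp_less_base)
  have r0: "r \<ge> 0" unfolding r_def by simp
  define f where "f n y = of_real (max 0 y powr (a - 1) * exp (- c * y)) * ((- d * of_real y)^n / fact n)"
    for n :: nat and y :: real
  have eqf: "f n y = of_real (max 0 y powr (a + real n - 1) * exp (- c * y)) * ((- d)^n / fact n)" for n y
  proof (cases "y \<ge> 0")
    case True
    then have "max 0 y powr (a - 1) * y ^ n = max 0 y powr (a + real n - 1)"
      using maxpow_mult_pow[OF a, of y n] by simp
    then have "of_real (max 0 y powr (a + real n - 1)) = (of_real (max 0 y powr (a - 1)) * of_real y ^ n :: complex)"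
      by (metis of_real_mult of_real_power)
    moreover have "(- d * of_real y)^n = (- d)^n * of_real y ^ n" by (rule power_mult_distrib)
    ultimately show ?thesis unfolding f_def by (simp add: mult_ac of_real_mult times_divide_eq_right)
  next
    case False
    then show ?thesis unfolding f_def by (simp add: max_def)
  qed
  have nf: "norm (f n y) = max 0 y powr (a + real n - 1) * exp (- c * y) * (r^n / fact n)" for n y
    unfolding eqf r_def by (simp add: norm_mult norm_divide norm_power)
  have gI: "integrable lborel (\<lambda>y. max 0 y powr (a + real n - 1) * exp (- c * y))"
    and gV: "(LINT y|lborel. max 0 y powr (a + real n - 1) * exp (- c * y)) = Gamma (a + n) / c powr (a + n)" for n
    using gamma_scaled_real[of "a + n" c] a c by auto
  have fI: "integrable lborel (f n)" for n
    unfolding eqf by (intro integrable_mult_left integrable_of_real gI)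
  have fV: "integral\<^sup>L lborel (f n) = of_real (Gamma (a + n) / c powr (a + n)) * ((- d)^n / fact n)" for n
    unfolding eqf by (subst integral_mult_left_zero) (simp only: integral_complex_of_real gV)
  have nfI: "(LINT y|lborel. norm (f n y)) = Gamma (a + n) / c powr (a + n) * (r^n / fact n)" for n
    unfolding nf by (subst integral_mult_left_zero) (simp only: gV)
  have G: "integrable lborel (\<lambda>y. max 0 y powr (a - 1) * exp (- (c - r) * y))"
    using gamma_scaled_real[of a "c - r"] a rc by auto
  have psum: "(\<Sum>n<N. norm (f n y)) \<le> max 0 y powr (a - 1) * exp (- (c - r) * y)" for N y
  proof (cases "y \<ge> 0")
    case True
    have "(\<Sum>n<N. norm (f n y)) = max 0 y powr (a - 1) * exp (- c * y) * (\<Sum>n<N. (r * y)^n /\<^sub>R fact n)"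
      unfolding f_def using True r0
      by (simp add: sum_distrib_left norm_mult norm_divide norm_power r_def power_mult_distrib divide_inverse mult_ac norm_inverse)
    also have "(\<Sum>n<N. (r * y)^n /\<^sub>R fact n) \<le> exp (r * y)"
      using sum_le_suminf[OF sums_summable[OF exp_converges[of "r*y"]], of "{..<N}"] True r0
        sums_unique[OF exp_converges[of "r*y"]]
      by (simp add: zero_le_mult_iff)
    finally have "(\<Sum>n<N. norm (f n y)) \<le> max 0 y powr (a - 1) * exp (- c * y) * exp (r * y)"
      by (simp add: mult_left_mono)
    also have "\<dots> = max 0 y powr (a - 1) * exp (- (c - r) * y)"
      by (simp add: mult.assoc exp_add[symmetric] algebra_simps)
    finally show ?thesis .
  next
    case False
    then show ?thesis unfolding f_def by (simp add: max_def)
  qed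
  have summ: "summable (\<lambda>n. LINT y|lborel. norm (f n y))"
  proof (rule summableI_nonneg_bounded)
    show "0 \<le> (LINT y|lborel. norm (f n y))" for n by simp
    fix N
    have "(\<Sum>n<N. LINT y|lborel. norm (f n y)) = (LINT y|lborel. (\<Sum>n<N. norm (f n y)))"
      by (rule Bochner_Integration.integral_sum[where I="{..<N}" and f="\<lambda>n y. norm (f n y)", symmetric]) (simp add: fI)
    also have "\<dots> \<le> (LINT y|lborel. max 0 y powr (a - 1) * exp (- (c - r) * y))"
      by (intro integral_mono G psum Bochner_Integration.integrable_sum integrable_norm fI)
    finally show "(\<Sum>n<N. LINT y|lborel. norm (f n y)) \<le> (LINT y|lborel. max 0 y powr (a - 1) * exp (- (c - r) * y))" .
  qed
  have ptw: "summable (\<lambda>n. norm (f n y))" for y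
  proof -
    have "summable (\<lambda>n. max 0 y powr (a - 1) * exp (- c * y) * (norm (- d * of_real y) ^ n /\<^sub>R fact n))"
      by (intro summable_mult sums_summable[OF exp_converges])
    then show ?thesis unfolding f_def
      by (simp add: norm_mult norm_divide norm_power divide_inverse mult_ac norm_inverse)
  qed
  have sumf: "(\<lambda>n. f n y) sums (of_real (max 0 y powr (a - 1)) * exp (- (w * of_real y)))" for y
  proof -
    have "exp (- (w * of_real y)) = of_real (exp (- c * y)) * exp (- d * of_real y)"
      unfolding d_def by (simp add: exp_of_real[symmetric] exp_add[symmetric] algebra_simps)
    moreover have "(\<lambda>n. of_real (max 0 y powr (a - 1) * exp (- c * y)) * ((- d * of_real y)^n /\<^sub>R fact n))
        sums (of_real (max 0 y powr (a - 1) * exp (- c * y)) * exp (- d * of_real y))"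
      by (intro sums_mult exp_converges)
    ultimately show ?thesis unfolding f_def
      by (simp add: scaleR_conv_of_real divide_inverse mult_ac)
  qed
  have fsum: "(\<lambda>y. (\<Sum>n. f n y)) = (\<lambda>y. of_real (max 0 y powr (a - 1)) * exp (- (w * of_real y)))"
    using sumf by (simp add: sums_iff)
  show "integrable lborel (\<lambda>y. of_real (max 0 y powr (a - 1)) * exp (- (w * of_real y)))"
    using integrable_suminf[OF fI _ summ] ptw unfolding fsum by simp
  have S: "(\<lambda>n. integral\<^sup>L lborel (f n)) sums (LINT y|lborel. of_real (max 0 y powr (a - 1)) * exp (- (w * of_real y)))"
    using sums_integral[OF fI _ summ] ptw unfolding fsum by simp
  have termeq: "integral\<^sup>L lborel (f n) = of_real (Gamma a * c powr (- a)) * (((- of_real a) gchoose n) * (d / of_real c)^n)" for n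
  proof -
    have ga: "Gamma a > 0" using a by (rule Gamma_real_pos)
    have poch: "pochhammer a n = Gamma (a + n) / Gamma a"
      using pochhammer_Gamma[of a n] a by (auto simp: nonpos_Ints_def)
    have gb: "((- complex_of_real a) gchoose n) = (- 1) ^ n * of_real (pochhammer a n) / fact n"
      by (simp add: gbinomial_pochhammer pochhammer_of_real)
    have cp: "c powr (a + n) = c powr a * c ^ n"
      using c by (simp add: powr_add powr_realpow)
    have R: "Gamma (a + n) / c powr (a + n) = Gamma a * c powr (- a) * (Gamma (a + n) / Gamma a) / c ^ n"
      using ga c by (simp add: cp powr_minus field_simps)
    have "integral\<^sup>L lborel (f n) = of_real (Gamma a * c powr (- a)) * of_real (Gamma (a + n) / Gamma a) / of_real c ^ n * ((- 1) ^ n * d ^ n / fact n)"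
      unfolding fV R by (simp add: power_minus[of d] of_real_mult of_real_divide of_real_power)
    also have "\<dots> = of_real (Gamma a * c powr (- a)) * (((- 1) ^ n * of_real (Gamma (a + n) / Gamma a) / fact n) * (d / of_real c)^n)"
      by (simp add: power_divide divide_inverse mult_ac power_mult_distrib power_inverse)
    finally show ?thesis unfolding gb poch .
  qed
  have B: "(\<lambda>n. ((- of_real a) gchoose n) * (d / of_real c)^n) sums (1 + d / of_real c) powr (- of_real a)"
    by (rule gen_binomial_complex) (use rc c r_def in \<open>simp add: norm_divide\<close>)
  have "(\<lambda>n. integral\<^sup>L lborel (f n)) sums (of_real (Gamma a * c powr (- a)) * (1 + d / of_real c) powr (- of_real a))"
    unfolding termeq by (intro sums_mult B)
  moreover have "of_real (Gamma a * c powr (- a)) * (1 + d / of_real c) powr (- of_real a) = of_real (Gamma a) / w powr of_real a"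
  proof -
    have wc: "w = of_real c * (1 + d / of_real c)" unfolding d_def using c by (simp add: field_simps)
    have "w powr (- of_real a) = of_real c powr (- of_real a) * (1 + d / of_real c) powr (- of_real a)"
      by (subst wc, rule powr_times_real_left) (use c in auto)
    moreover have "of_real c powr (- of_real a) = (of_real (c powr (- a)) :: complex)"
      using powr_of_real[of c "- a"] c by simp
    ultimately show ?thesis
      by (simp add: powr_minus divide_inverse)
  qed
  ultimately show "(LINT y|lborel. of_real (max 0 y powr (a - 1)) * exp (- (w * of_real y)))
           = of_real (Gamma a) / w powr of_real a"
    using S sums_unique2 by metis
qed

lemma Complex_nz: "s > 0 \<Longrightarrow> Complex s t \<noteq> 0"
  by (simp add: complex_eq_iff)

lemma cont_Complex: "continuous_on A (\<lambda>t. Complex s t)"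
proof -
  have "(\<lambda>t. Complex s t) = (\<lambda>t. complex_of_real s + \<i> * complex_of_real t)"
    by (auto simp: complex_eq_iff)
  then show ?thesis by (auto intro!: continuous_intros)
qed

lemma cont_cpow:
  assumes "s > 0" shows "continuous_on A (\<lambda>t. Complex s t powr b)"
  by (rule continuous_on_powr_complex) (use assms in \<open>auto intro!: continuous_intros cont_Complex simp: complex_eq_iff\<close>)

lemma meas_cpow[measurable]:
  assumes "s > 0" shows "(\<lambda>t. Complex s t powr b) \<in> borel_measurable borel"
  by (rule borel_measurable_continuous_onI) (rule cont_cpow[OF assms])

lemma meas_Complex[measurable]: "(\<lambda>t. Complex s t) \<in> borel_measurable borel"
  by (rule borel_measurable_continuous_onI) (rule cont_Complex)

lemma norm_cpow: "norm (z powr complex_of_real b) = norm z powr b"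
  by (subst norm_powr_real_powr') auto

lemma powr_inf_integrable:
  fixes b :: real assumes b: "b > 1"
  shows "integrable lborel (\<lambda>t. indicator {1..} t * t powr (- b))"
proof -
  have "(\<lambda>t. t powr (- b)) integrable_on {1..}"
    using has_integral_powr_to_inf[of "- b" 1] b by (auto simp: integrable_on_def)
  then have "(\<lambda>t. t powr (- b)) absolutely_integrable_on {1..}"
    by (rule nonnegative_absolutely_integrable_1) auto
  then show ?thesis unfolding set_integrable_def
    by (subst (asm) integrable_completion) (auto simp: mult_ac)
qed

lemma cnorm_integrable:
  fixes b s :: real assumes b: "b > 1" and s: "s > 0"
  shows "integrable lborel (\<lambda>t. cmod (Complex s t) powr (- b))"
proof (rule Bochner_Integration.integrable_bound)
  define D where "D t = indicator {-1..1} t * s powr (- b) + indicator {1..} t * t powr (- b)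
      + indicator {1..} (- t) * (- t) powr (- b)" for t :: real
  have i1: "integrable lborel (\<lambda>t. indicator {1..} t * t powr (- b))"
    by (rule powr_inf_integrable[OF b])
  have i2: "integrable lborel (\<lambda>t. indicator {1..} (0 + (-1) * t) * (0 + (-1) * t) powr (- b))"
    by (rule lborel_integrable_real_affine[OF i1]) simp
  have i3: "integrable lborel (\<lambda>t::real. indicator {-1..1} t * s powr (- b) :: real)"
    by (intro integrable_mult_left integrable_real_indicator) (auto intro: borel_closed simp: emeasure_lborel_Icc)
  show "integrable lborel D"
    unfolding D_def using i1 i2 i3 by (intro Bochner_Integration.integrable_add) auto
  show "AE t in lborel. norm (cmod (Complex s t) powr (- b)) \<le> norm (D t)"
  proof (intro AE_I2)
    fix t :: real
    have cm: "cmod (Complex s t) = sqrt (s^2 + t^2)" by (simp add: cmod_def)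
    have ge1: "cmod (Complex s t) \<ge> s" unfolding cm using s by (simp add: real_le_rsqrt)
    have ge2: "cmod (Complex s t) \<ge> \<bar>t\<bar>" unfolding cm by (simp add: real_le_rsqrt)
    have pos: "cmod (Complex s t) > 0" using s by (simp add: Complex_nz)
    have "cmod (Complex s t) powr (- b) \<le> D t"
    proof (cases "\<bar>t\<bar> \<le> 1")
      case True
      have "cmod (Complex s t) powr (- b) \<le> s powr (- b)"
        using ge1 s b by (intro powr_mono2') auto
      then show ?thesis using True unfolding D_def by (auto simp: indicator_def)
    next
      case False
      have "cmod (Complex s t) powr (- b) \<le> \<bar>t\<bar> powr (- b)"
        using ge2 False b by (intro powr_mono2') auto
      then show ?thesis using False unfolding D_def by (auto simp: indicator_def)
    qed
    moreover have "0 \<le> D t" unfolding D_def by (auto simp: indicator_def)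
    ultimately show "norm (cmod (Complex s t) powr (- b)) \<le> norm (D t)" by simp
  qed
qed (use s in measurable)

lemma gauss_integrable:
  fixes N :: real assumes N: "N > 0"
  shows "integrable lborel (\<lambda>t::real. exp (- ((t / N)^2) / 2))"
proof -
  have i: "integrable lborel (\<lambda>r::real. sqrt (2 * pi) * std_normal_density r)"
    by (intro integrable_mult_right) simp
  have E: "(\<lambda>t::real. exp (- ((t / N)^2) / 2)) = (\<lambda>t. sqrt (2 * pi) * std_normal_density (0 + (1 / N) * t))"
    by (simp add: std_normal_density_def)
  show ?thesis unfolding E
    by (rule lborel_integrable_real_affine[OF i]) (use N in simp)
qed

lemma gauss_fourier:
  fixes N u :: real assumes N: "N > 0"
  shows "(LINT t|lborel. complex_of_real (exp (- ((t / N)^2) / 2)) * iexp (t * u))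
         = complex_of_real (N * sqrt (2 * pi) * exp (- ((N * u)^2) / 2))"
proof -
  define F where "F t = complex_of_real (exp (- ((t / N)^2) / 2)) * iexp (t * u)" for t
  have "(LINT t|lborel. F t) = \<bar>N\<bar> *\<^sub>R (LINT r|lborel. F (0 + N * r))"
    by (rule lborel_integral_real_affine) (use N in simp)
  also have "(\<lambda>r. F (0 + N * r)) = (\<lambda>r. complex_of_real (sqrt (2 * pi)) * (std_normal_density r *\<^sub>R iexp ((N * u) * r)))"
    using N by (auto simp: F_def std_normal_density_def scaleR_conv_of_real mult_ac)
  also have "(LINT r|lborel. complex_of_real (sqrt (2 * pi)) * (std_normal_density r *\<^sub>R iexp ((N * u) * r)))
      = complex_of_real (sqrt (2 * pi)) * (LINT r|lborel. std_normal_density r *\<^sub>R iexp ((N * u) * r))"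
    by (rule integral_mult_right_zero)
  also have "(LINT r|lborel. std_normal_density r *\<^sub>R iexp ((N * u) * r)) = char std_normal_distribution (N * u)"
    unfolding char_def by (subst integral_density) auto
  also have "\<dots> = complex_of_real (exp (- ((N * u)^2) / 2))"
    by (simp add: char_std_normal_distribution)
  finally show ?thesis using N unfolding F_def by (simp add: scaleR_conv_of_real mult_ac)
qed

lemma exp_ge_pow_fact:
  fixes x :: real assumes "x \<ge> 0"
  shows "x ^ m / fact m \<le> exp x"
proof -
  have "(\<Sum>n\<in>{m}. x ^ n /\<^sub>R fact n) \<le> (\<Sum>n. x ^ n /\<^sub>R fact n)"
    by (rule sum_le_suminf) (use assms sums_summable[OF exp_converges[of x]] in auto)
  then show ?thesis using sums_unique[OF exp_converges[of x]] by (simp add: divide_inverse mult_ac)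
qed

lemma H_bound:
  fixes a s :: real assumes a: "a > 1" and s: "s > 0"
  obtains B where "\<And>y. 0 \<le> max 0 y powr (a - 1) * exp (- s * y)"
    "\<And>y. max 0 y powr (a - 1) * exp (- s * y) \<le> B"
proof -
  define m where "m = nat \<lceil>a - 1\<rceil>"
  have am: "a - 1 \<le> real m" unfolding m_def by linarith
  define B where "B = 1 + fact m / s ^ m"
  have "max 0 y powr (a - 1) * exp (- s * y) \<le> B" for y
  proof (cases "y \<le> 1")
    case True
    have "max 0 y powr (a - 1) \<le> 1"
      using True a by (cases "y \<le> 0") (auto simp: max_def intro: powr_le1)
    moreover have "exp (- s * y) \<le> 1 \<or> y \<le> 0"
      using s by (auto simp: mult_nonneg_nonneg)
    moreover have "0 \<le> fact m / s ^ m" using s by simp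
    ultimately show ?thesis unfolding B_def
      by (cases "y \<le> 0") (auto simp: max_def intro!: mult_le_one[THEN order_trans])
  next
    case False
    then have y: "y > 1" by simp
    have "max 0 y powr (a - 1) \<le> y ^ m"
      using y am by (simp add: max_def powr_realpow[symmetric] powr_mono)
    moreover have "(s * y) ^ m / fact m \<le> exp (s * y)"
      using y s by (intro exp_ge_pow_fact) simp
    then have "y ^ m * exp (- s * y) \<le> fact m / s ^ m"
      using s y by (simp add: exp_minus field_simps power_mult_distrib)
    ultimately have "max 0 y powr (a - 1) * exp (- s * y) \<le> fact m / s ^ m"
      by (meson exp_ge_zero mult_right_mono order_trans)
    then show ?thesis unfolding B_def by simp
  qed
  then show ?thesis using that[of B] by simp
qed

lemma exp_Complex_split:
  "exp (Complex s t * complex_of_real y) = complex_of_real (exp (s * y)) * iexp (t * y)"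
proof -
  have "Complex s t * complex_of_real y = complex_of_real (s * y) + \<i> * complex_of_real (t * y)"
    by (simp add: complex_eq_iff)
  then show ?thesis by (simp only: exp_add exp_of_real)
qed

lemma iexp_combine: "iexp (- (t * y)) * iexp (t * x) = iexp (t * (x - y))"
proof -
  have "\<i> * complex_of_real (- (t * y)) + \<i> * complex_of_real (t * x) = \<i> * complex_of_real (t * (x - y))"
    by (simp add: algebra_simps)
  then show ?thesis by (simp only: exp_add[symmetric])
qed

lemma H_cont:
  fixes a s x :: real assumes a: "a > 1"
  shows "isCont (\<lambda>y. max 0 y powr (a - 1) * exp (- s * y)) x"
  unfolding isCont_def using a by (intro tendsto_intros) auto

lemma core_inversion:
  fixes s a x :: real assumes s: "s > 0" and a: "a > 1"
  shows "integrable lborel (\<lambda>t. exp (Complex s t * complex_of_real x) / Complex s t powr complex_of_real a)"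
    and "(LINT t|lborel. exp (Complex s t * complex_of_real x) / Complex s t powr complex_of_real a)
          = complex_of_real (2 * pi * max 0 x powr (a - 1) / Gamma a)"
proof -
  define H where "H y = max 0 y powr (a - 1) * exp (- s * y)" for y
  obtain B where H0: "\<And>y. 0 \<le> H y" and HB: "\<And>y. H y \<le> B"
    using H_bound[OF a s] unfolding H_def by metis
  have Hm[measurable]: "H \<in> borel_measurable borel" unfolding H_def by measurable
  have HI: "integrable lborel H" unfolding H_def using gamma_scaled_real(1)[of a s] a s by simp
  have ga: "Gamma a > 0" using a by (intro Gamma_real_pos) simp
  define Fh where "Fh t = complex_of_real (Gamma a) / Complex s t powr complex_of_real a" for t
  have Fhm[measurable]: "Fh \<in> borel_measurable borel" unfolding Fh_def using s by measurable
  have Fh_eq: "Fh t = (LINT y|lborel. complex_of_real (H y) * iexp (- (t * y)))" for t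
  proof -
    have "exp (- (Complex s t * complex_of_real y)) = complex_of_real (exp (- s * y)) * iexp (- (t * y))" for y
    proof -
      have "- (Complex s t * complex_of_real y) = Complex (- s) (- t) * complex_of_real y"
        by (simp add: complex_eq_iff)
      then show ?thesis using exp_Complex_split[of "- s" "- t" y] by simp
    qed
    then have "(\<lambda>y. complex_of_real (max 0 y powr (a - 1)) * exp (- (Complex s t * complex_of_real y)))
        = (\<lambda>y. complex_of_real (H y) * iexp (- (t * y)))"
      unfolding H_def by (auto simp: mult_ac)
    then show ?thesis using laplace_complex(2)[of a "Complex s t"] a s unfolding Fh_def by simp
  qed
  have normFh: "norm (Fh t) = Gamma a * cmod (Complex s t) powr (- a)" for t
    using ga s unfolding Fh_def by (simp add: norm_divide norm_cpow powr_minus divide_inverse norm_mult norm_inverse)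
  have FhI: "integrable lborel Fh"
  proof (rule Bochner_Integration.integrable_bound)
    show "integrable lborel (\<lambda>t. Gamma a * cmod (Complex s t) powr (- a))"
      using cnorm_integrable[OF a s] by simp
    show "AE t in lborel. norm (Fh t) \<le> norm (Gamma a * cmod (Complex s t) powr (- a))"
      using ga by (auto simp: normFh)
  qed simp
  define N where "N n = real (Suc n)" for n
  have Npos: "N n > 0" for n unfolding N_def by simp
  define g where "g n t = exp (- ((t / N n)^2) / 2)" for n t
  have gm[measurable]: "g n \<in> borel_measurable borel" for n unfolding g_def by measurable
  have gI: "integrable lborel (g n)" for n unfolding g_def using gauss_integrable[OF Npos] .
  define In where "In n = (LINT t|lborel. Fh t * iexp (t * x) * complex_of_real (g n t))" for n
  have conv1: "In \<longlonglongrightarrow> (LINT t|lborel. Fh t * iexp (t * x))"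
    unfolding In_def
  proof (rule integral_dominated_convergence[where w="\<lambda>t. norm (Fh t)"])
    show "integrable lborel (\<lambda>t. norm (Fh t))" using FhI by simp
    show "AE t in lborel. (\<lambda>n. Fh t * iexp (t * x) * complex_of_real (g n t)) \<longlonglongrightarrow> Fh t * iexp (t * x)"
    proof (intro AE_I2)
      fix t
      have "(\<lambda>n. t * inverse (real (Suc n))) \<longlonglongrightarrow> t * 0"
        by (intro tendsto_intros LIMSEQ_inverse_real_of_nat)
      then have "(\<lambda>n. t / N n) \<longlonglongrightarrow> 0" by (simp add: N_def divide_inverse)
      then have "(\<lambda>n. g n t) \<longlonglongrightarrow> exp (- (0^2) / 2)" unfolding g_def by (intro tendsto_intros) auto
      then have "(\<lambda>n. Fh t * iexp (t * x) * complex_of_real (g n t)) \<longlonglongrightarrow> Fh t * iexp (t * x) * complex_of_real 1"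
        by (intro tendsto_intros) simp
      then show "(\<lambda>n. Fh t * iexp (t * x) * complex_of_real (g n t)) \<longlonglongrightarrow> Fh t * iexp (t * x)" by simp
    qed
    show "AE t in lborel. norm (Fh t * iexp (t * x) * complex_of_real (g n t)) \<le> norm (Fh t)" for n
    proof (intro AE_I2)
      fix t
      have "g n t \<le> 1" unfolding g_def by simp
      then show "norm (Fh t * iexp (t * x) * complex_of_real (g n t)) \<le> norm (Fh t)"
        by (simp add: norm_mult g_def mult_left_le)
    qed
  qed measurable
  have E2a: "In n = (LINT y|lborel. complex_of_real (H y * (N n * sqrt (2 * pi) * exp (- ((N n * (x - y))^2) / 2))))" for n
  proof -
    define G where "G t y = complex_of_real (H y * g n t) * iexp (t * (x - y))" for t y
    have Gm[measurable]: "(\<lambda>(t, y). G t y) \<in> borel_measurable (lborel \<Otimes>\<^sub>M lborel)"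
      unfolding G_def by measurable
    have nG: "norm (G t y) = H y * g n t" for t y
      using H0[of y] unfolding G_def g_def by (simp add: norm_mult)
    have GI: "integrable (lborel \<Otimes>\<^sub>M lborel) (\<lambda>(t, y). G t y)"
    proof (rule lborel_pair.Fubini_integrable)
      show "(\<lambda>(t, y). G t y) \<in> borel_measurable (lborel \<Otimes>\<^sub>M lborel)" by (rule Gm)
      have "(\<lambda>t. LINT y|lborel. norm (case (t, y) of (t, y) \<Rightarrow> G t y)) = (\<lambda>t. g n t * (LINT y|lborel. H y))"
        by (auto simp: nG mult_ac)
      then show "integrable lborel (\<lambda>t. LINT y|lborel. norm (case (t, y) of (t, y) \<Rightarrow> G t y))"
        using gI by simp
      show "AE t in lborel. integrable lborel (\<lambda>y. case (t, y) of (t, y) \<Rightarrow> G t y)"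
      proof (intro AE_I2)
        fix t
        show "integrable lborel (\<lambda>y. case (t, y) of (t, y) \<Rightarrow> G t y)"
        proof (rule Bochner_Integration.integrable_bound)
          show "integrable lborel (\<lambda>y. H y * g n t)" using HI by simp
          show "AE y in lborel. norm (case (t, y) of (t, y) \<Rightarrow> G t y) \<le> norm (H y * g n t)"
            using H0 by (auto simp: nG g_def)
        qed (simp only: prod.case G_def, measurable)
      qed
    qed
    have L: "(LINT y|lborel. G t y) = Fh t * iexp (t * x) * complex_of_real (g n t)" for t
    proof -
      have "(\<lambda>y. G t y) = (\<lambda>y. (iexp (t * x) * complex_of_real (g n t)) * (complex_of_real (H y) * iexp (- (t * y))))"
      proof
        fix y
        show "G t y = (iexp (t * x) * complex_of_real (g n t)) * (complex_of_real (H y) * iexp (- (t * y)))"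
          unfolding G_def iexp_combine[symmetric] by (simp only: of_real_mult mult_ac)
      qed
      then have "(LINT y|lborel. G t y) = (iexp (t * x) * complex_of_real (g n t)) * (LINT y|lborel. complex_of_real (H y) * iexp (- (t * y)))"
        by (simp only: integral_mult_right_zero)
      then show ?thesis unfolding Fh_eq[symmetric] by (simp only: mult_ac)
    qed
    have R: "(LINT t|lborel. G t y) = complex_of_real (H y * (N n * sqrt (2 * pi) * exp (- ((N n * (x - y))^2) / 2)))" for y
    proof -
      have "(\<lambda>t. G t y) = (\<lambda>t. complex_of_real (H y) * (complex_of_real (exp (- ((t / N n)^2) / 2)) * iexp (t * (x - y))))"
        unfolding G_def g_def by (auto simp: mult_ac)
      then show ?thesis using gauss_fourier[OF Npos[of n], where u="x - y"] by simp
    qed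
    have "In n = (LINT t|lborel. LINT y|lborel. G t y)" unfolding In_def L ..
    also have "\<dots> = (LINT y|lborel. LINT t|lborel. G t y)"
      using lborel_pair.Fubini_integral[OF GI] by simp
    finally show ?thesis unfolding R .
  qed
  have E2b: "(LINT y|lborel. H y * (N n * sqrt (2 * pi) * exp (- ((N n * (x - y))^2) / 2)))
      = 2 * pi * (LINT r|lborel. H (x - r / N n) * std_normal_density r)" for n
  proof -
    define f where "f y = H y * (N n * sqrt (2 * pi) * exp (- ((N n * (x - y))^2) / 2))" for y
    have "(LINT y|lborel. f y) = \<bar>- (1 / N n)\<bar> *\<^sub>R (LINT r|lborel. f (x + (- (1 / N n)) * r))"
      by (rule lborel_integral_real_affine) (use Npos[of n] in simp)
    also have "(\<lambda>r. f (x + (- (1 / N n)) * r)) = (\<lambda>r. (N n * (2 * pi)) * (H (x - r / N n) * std_normal_density r))"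
    proof
      fix r
      have "N n * (x - (x + - (1 / N n) * r)) = r" using Npos[of n] by (simp add: field_simps)
      moreover have "sqrt (2 * pi) * (1 / sqrt (2 * pi)) = 1" by simp
      ultimately show "f (x + (- (1 / N n)) * r) = (N n * (2 * pi)) * (H (x - r / N n) * std_normal_density r)"
        unfolding f_def std_normal_density_def
        by (simp add: field_simps real_sqrt_mult[symmetric])
    qed
    also have "(LINT r|lborel. (N n * (2 * pi)) * (H (x - r / N n) * std_normal_density r))
        = (N n * (2 * pi)) * (LINT r|lborel. H (x - r / N n) * std_normal_density r)"
      by (rule integral_mult_right_zero)
    finally show ?thesis unfolding f_def using Npos[of n] by simp
  qed
  have conv3: "(\<lambda>n. LINT r|lborel. H (x - r / N n) * std_normal_density r) \<longlonglongrightarrow> (LINT r|lborel. H x * std_normal_density r)"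
  proof (rule integral_dominated_convergence[where w="\<lambda>r. B * std_normal_density r"])
    show "integrable lborel (\<lambda>r. B * std_normal_density r)" by simp
    show "AE r in lborel. (\<lambda>n. H (x - r / N n) * std_normal_density r) \<longlonglongrightarrow> H x * std_normal_density r"
    proof (intro AE_I2)
      fix r
      have "(\<lambda>n. x - r * inverse (real (Suc n))) \<longlonglongrightarrow> x - r * 0"
        by (intro tendsto_intros LIMSEQ_inverse_real_of_nat)
      then have "(\<lambda>n. x - r / N n) \<longlonglongrightarrow> x" by (simp add: N_def divide_inverse)
      then have "(\<lambda>n. H (x - r / N n)) \<longlonglongrightarrow> H x"
        using H_cont[OF a, where s=s and x=x] unfolding H_def[abs_def] by (rule isCont_tendsto_compose[rotated])
      then show "(\<lambda>n. H (x - r / N n) * std_normal_density r) \<longlonglongrightarrow> H x * std_normal_density r"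
        by (intro tendsto_intros)
    qed
    show "AE r in lborel. norm (H (x - r / N n) * std_normal_density r) \<le> B * std_normal_density r" for n
      using H0 HB by (auto intro!: mult_right_mono simp: abs_mult)
  qed measurable
  have "In = (\<lambda>n. complex_of_real (2 * pi) * complex_of_real (LINT r|lborel. H (x - r / N n) * std_normal_density r))"
  proof
    fix n
    show "In n = complex_of_real (2 * pi) * complex_of_real (LINT r|lborel. H (x - r / N n) * std_normal_density r)"
      unfolding E2a integral_complex_of_real E2b by simp
  qed
  moreover have "(\<lambda>n. complex_of_real (2 * pi) * complex_of_real (LINT r|lborel. H (x - r / N n) * std_normal_density r))
      \<longlonglongrightarrow> complex_of_real (2 * pi) * complex_of_real (H x)"
  proof -
    have "(LINT r|lborel. H x * std_normal_density r) = H x" by simp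
    then show ?thesis using conv3 by (intro tendsto_intros) simp
  qed
  ultimately have key: "(LINT t|lborel. Fh t * iexp (t * x)) = complex_of_real (2 * pi) * complex_of_real (H x)"
    using conv1 LIMSEQ_unique by metis
  have FiI: "integrable lborel (\<lambda>t. Fh t * iexp (t * x))"
  proof (rule Bochner_Integration.integrable_bound)
    show "integrable lborel (\<lambda>t. norm (Fh t))" using FhI by simp
  qed (auto simp: norm_mult)
  have feq: "(\<lambda>t. exp (Complex s t * complex_of_real x) / Complex s t powr complex_of_real a)
      = (\<lambda>t. complex_of_real (exp (s * x) / Gamma a) * (Fh t * iexp (t * x)))"
  proof
    fix t
    have e: "exp (Complex s t * complex_of_real x) = complex_of_real (exp (s * x)) * iexp (t * x)"
      by (rule exp_Complex_split)
    have nz: "Complex s t powr complex_of_real a \<noteq> 0" using s by (simp add: Complex_nz)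
    show "exp (Complex s t * complex_of_real x) / Complex s t powr complex_of_real a
      = complex_of_real (exp (s * x) / Gamma a) * (Fh t * iexp (t * x))"
      unfolding e Fh_def using ga nz by (simp add: field_simps)
  qed
  show "integrable lborel (\<lambda>t. exp (Complex s t * complex_of_real x) / Complex s t powr complex_of_real a)"
    unfolding feq using FiI by simp
  show "(LINT t|lborel. exp (Complex s t * complex_of_real x) / Complex s t powr complex_of_real a)
          = complex_of_real (2 * pi * max 0 x powr (a - 1) / Gamma a)"
    unfolding feq integral_mult_right_zero key H_def
    by (simp add: exp_minus field_simps)
qed

lemma k_lt_p:
  fixes p :: real and j :: int
  assumes "j \<le> \<lceil>p - 1\<rceil>" "k < nat (j + 1)"
  shows "real k < p"
proof -
  have "int k \<le> j" using assms(2) by linarith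
  then have "real k \<le> real_of_int j" by linarith
  also have "\<dots> \<le> of_int \<lceil>p - 1\<rceil>" using assms(1) by simp
  also have "\<dots> < p" using ceiling_correct[of "p - 1"] by linarith
  finally show ?thesis .
qed

lemma cpow_diff_nat:
  assumes "s > 0"
  shows "Complex s t ^ k / Complex s t powr complex_of_real q
    = 1 / Complex s t powr complex_of_real (q - real k)"
proof -
  have nz: "Complex s t \<noteq> 0" using assms by (rule Complex_nz)
  have "Complex s t powr complex_of_real (q - real k) = Complex s t powr (complex_of_real q - of_nat k)"
    by simp
  also have "\<dots> = Complex s t powr complex_of_real q / Complex s t powr of_nat k"
    by (rule powr_diff)
  also have "Complex s t powr of_nat k = Complex s t ^ k"
    using nz by (simp add: powr_nat')
  finally show ?thesis using nz by (simp add: field_simps)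
qed

lemma pointwise_trunc:
  fixes s p x :: real and j :: int
  assumes s: "s > 0" and p: "p > 0" and j: "j \<le> \<lceil>p - 1\<rceil>"
  shows "integrable lborel (\<lambda>t. exp_trunc j (Complex s t * complex_of_real x) / Complex s t powr complex_of_real (p + 1))"
    and "(LINT t|lborel. exp_trunc j (Complex s t * complex_of_real x) / Complex s t powr complex_of_real (p + 1))
          = complex_of_real (2 * pi * max 0 x powr p / Gamma (p + 1))"
proof -
  define n0 where "n0 = nat (j + 1)"
  define A where "A t = exp (Complex s t * complex_of_real x) / Complex s t powr complex_of_real (p + 1)" for t
  define C where "C k t = complex_of_real (x ^ k / fact k) * (exp (Complex s t * complex_of_real 0) / Complex s t powr complex_of_real (p + 1 - real k))" for k t
  have eq: "exp_trunc j (Complex s t * complex_of_real x) / Complex s t powr complex_of_real (p + 1)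
      = A t - (\<Sum>k<n0. C k t)" for t
  proof -
    have "(Complex s t * complex_of_real x) ^ k / fact k / Complex s t powr complex_of_real (p + 1) = C k t" for k
    proof -
      have "(Complex s t * complex_of_real x) ^ k / fact k / Complex s t powr complex_of_real (p + 1)
          = complex_of_real (x ^ k / fact k) * (Complex s t ^ k / Complex s t powr complex_of_real (p + 1))"
        by (simp add: power_mult_distrib)
      also have "\<dots> = C k t" unfolding cpow_diff_nat[OF s] C_def by simp
      finally show ?thesis .
    qed
    then show ?thesis unfolding exp_trunc_def A_def n0_def
      by (simp add: diff_divide_distrib sum_divide_distrib)
  qed
  have kp: "p + 1 - real k > 1" if "k < n0" for k
    using k_lt_p[OF j, of k] that unfolding n0_def by simp
  have AI: "integrable lborel A" unfolding A_def using core_inversion(1)[OF s, of "p + 1" x] p by simp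
  have AV: "integral\<^sup>L lborel A = complex_of_real (2 * pi * max 0 x powr p / Gamma (p + 1))"
    unfolding A_def using core_inversion(2)[OF s, of "p + 1" x] p by simp
  have CI: "integrable lborel (C k)" if "k < n0" for k
    unfolding C_def by (rule integrable_mult_right, rule core_inversion(1)[OF s kp[OF that]])
  have CV: "integral\<^sup>L lborel (C k) = 0" if "k < n0" for k
    unfolding C_def integral_mult_right_zero core_inversion(2)[OF s kp[OF that]] by simp
  have SI: "integrable lborel (\<lambda>t. \<Sum>k<n0. C k t)"
    by (rule Bochner_Integration.integrable_sum) (use CI in auto)
  have SV: "(LINT t|lborel. (\<Sum>k<n0. C k t)) = 0"
    by (subst Bochner_Integration.integral_sum) (use CI CV in auto)
  show "integrable lborel (\<lambda>t. exp_trunc j (Complex s t * complex_of_real x) / Complex s t powr complex_of_real (p + 1))"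
    unfolding eq using AI SI by simp
  show "(LINT t|lborel. exp_trunc j (Complex s t * complex_of_real x) / Complex s t powr complex_of_real (p + 1))
          = complex_of_real (2 * pi * max 0 x powr p / Gamma (p + 1))"
    unfolding eq using AI SI AV SV by simp
qed

lemma norm_exp_trunc_bound:
  "norm (exp_trunc j (Complex s t * complex_of_real x))
     \<le> exp (s * x) + (\<Sum>k<nat (j + 1). cmod (Complex s t) ^ k * (\<bar>x\<bar> ^ k / fact k))"
proof -
  have "norm (exp_trunc j (Complex s t * complex_of_real x))
      \<le> norm (exp (Complex s t * complex_of_real x)) + norm (\<Sum>k<nat (j + 1). (Complex s t * complex_of_real x) ^ k / fact k)"
    unfolding exp_trunc_def of_nat_fact by (rule norm_triangle_ineq4)
  also have "norm (\<Sum>k<nat (j + 1). (Complex s t * complex_of_real x) ^ k / fact k)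
      \<le> (\<Sum>k<nat (j + 1). norm ((Complex s t * complex_of_real x) ^ k / fact k))"
    by (rule norm_sum)
  also have "norm (exp (Complex s t * complex_of_real x)) = exp (s * x)" by simp
  finally show ?thesis
    by (simp add: norm_mult norm_divide norm_power power_mult_distrib)
qed

lemma exp_trunc_cnj: "cnj (exp_trunc m w) = exp_trunc m (cnj w)"
  unfolding exp_trunc_def by (simp add: exp_cnj)

lemma half_line:
  fixes F :: "real \<Rightarrow> complex"
  assumes FI: "integrable lborel F" and sym: "\<And>t. F (- t) = cnj (F t)"
  shows "set_integrable lborel {0..} (\<lambda>t. Re (F t))"
    and "integral\<^sup>L lborel F = complex_of_real (2 * (LBINT t:{0..}. Re (F t)))"
proof -
  have Fm[measurable]: "F \<in> borel_measurable borel" using FI by auto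
  define g where "g t = Re (F t)" for t
  have gI: "integrable lborel g" unfolding g_def using FI by simp
  have gm[measurable]: "g \<in> borel_measurable borel" unfolding g_def by measurable
  have geven: "g (- t) = g t" for t unfolding g_def sym by simp
  define h where "h t = g t * indicator {0..} t" for t
  have hI: "integrable lborel h" unfolding h_def by (rule integrable_real_mult_indicator) (use gI in auto)
  have hm[measurable]: "h \<in> borel_measurable borel" unfolding h_def by measurable
  have hI': "integrable lborel (\<lambda>t. h (0 + (-1) * t))"
    by (rule lborel_integrable_real_affine[OF hI]) simp
  have hV': "integral\<^sup>L lborel h = (LINT t|lborel. h (0 + (-1) * t))"
    using lborel_integral_real_affine[of "-1" h 0] by simp
  have "AE t in lborel. t \<noteq> 0" by (rule AE_lborel_singleton)
  then have "AE t in lborel. g t = h t + h (0 + (-1) * t)"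
  proof (rule AE_mp, intro AE_I2 impI)
    fix t :: real assume "t \<noteq> 0"
    then show "g t = h t + h (0 + (-1) * t)"
      unfolding h_def using geven[of t] by (cases "t > 0") (auto simp: indicator_def)
  qed
  then have "integral\<^sup>L lborel g = (LINT t|lborel. h t + h (0 + (-1) * t))"
    by (intro integral_cong_AE) auto
  also have "\<dots> = 2 * integral\<^sup>L lborel h"
    using hI hI' hV' by simp
  finally have gV: "integral\<^sup>L lborel g = 2 * integral\<^sup>L lborel h" .
  have hset: "(LBINT t:{0..}. Re (F t)) = integral\<^sup>L lborel h"
    unfolding set_lebesgue_integral_def h_def g_def by (simp add: mult_ac)
  show "set_integrable lborel {0..} (\<lambda>t. Re (F t))"
    unfolding set_integrable_def using hI unfolding h_def g_def by (simp add: mult_ac)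
  have "integral\<^sup>L lborel F = (LINT t|lborel. F (0 + (-1) * t))"
    using lborel_integral_real_affine[of "-1" F 0] by simp
  also have "\<dots> = cnj (integral\<^sup>L lborel F)" by (simp add: sym)
  finally have "Im (integral\<^sup>L lborel F) = 0" by (simp add: complex_eq_iff)
  then have "integral\<^sup>L lborel F = complex_of_real (Re (integral\<^sup>L lborel F))"
    by (simp add: complex_eq_iff)
  also have "Re (integral\<^sup>L lborel F) = integral\<^sup>L lborel g"
    unfolding g_def using FI by simp
  finally show "integral\<^sup>L lborel F = complex_of_real (2 * (LBINT t:{0..}. Re (F t)))"
    unfolding hset gV .
qed

theorem theorem2p1:
  fixes M :: "'a measure" and X :: "'a \<Rightarrow> real"
    and s1 s2 p s :: real and j :: int
  assumes "prob_space M"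
    and "X \<in> borel_measurable M"
    and "s1 \<le> 0" and "0 \<le> s2"
    and "\<And>u. u \<in> {s1..s2} \<Longrightarrow> integrable M (\<lambda>\<omega>. exp (u * X \<omega>))"
    and "p > 0"
    and "s \<in> {0<..s2}"
    and "-1 \<le> j" and "j \<le> \<lceil>p - 1\<rceil>"
    and "integrable M (\<lambda>\<omega>. \<bar>X \<omega>\<bar> ^ nat j)"
  shows "integrable M (\<lambda>\<omega>. max 0 (X \<omega>) powr p)
    \<and> (\<forall>t::real. integrable M (\<lambda>\<omega>. exp_trunc j (Complex s t * of_real (X \<omega>))))
    \<and> integrable lborel (\<lambda>t::real.
         (LINT \<omega>|M. exp_trunc j (Complex s t * of_real (X \<omega>))) / (Complex s t) powr (of_real (p + 1)))
    \<and> set_integrable lborel {0..} (\<lambda>t::real.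
         Re ((LINT \<omega>|M. exp_trunc j (Complex s t * of_real (X \<omega>))) / (Complex s t) powr (of_real (p + 1))))
    \<and> complex_of_real (LINT \<omega>|M. max 0 (X \<omega>) powr p)
        = of_real (Gamma (p + 1) / (2 * pi)) * (LINT t|lborel.
         (LINT \<omega>|M. exp_trunc j (Complex s t * of_real (X \<omega>))) / (Complex s t) powr (of_real (p + 1)))
    \<and> (LINT \<omega>|M. max 0 (X \<omega>) powr p)
        = Gamma (p + 1) / pi * (LBINT t:{0..}.
         Re ((LINT \<omega>|M. exp_trunc j (Complex s t * of_real (X \<omega>))) / (Complex s t) powr (of_real (p + 1))))"
proof -
  interpret P: prob_space M by fact
  interpret PS: pair_sigma_finite M lborel ..
  have Xm[measurable]: "X \<in> borel_measurable M" by fact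
  have s: "s > 0" and ss2: "s \<le> s2" using assms(7) by auto
  have p: "p > 0" by fact
  have j: "j \<le> \<lceil>p - 1\<rceil>" by fact
  have ga: "Gamma (p + 1) > 0" using p by (intro Gamma_real_pos) simp
  define n0 where "n0 = nat (j + 1)"
  have expI: "integrable M (\<lambda>\<omega>. exp (s * X \<omega>))"
    using assms(5)[of s] assms(3) s ss2 by auto
  have momI: "integrable M (\<lambda>\<omega>. \<bar>X \<omega>\<bar> ^ k / fact k)" if "k < n0" for k
  proof -
    have kj: "k \<le> nat j" using that unfolding n0_def by linarith
    have "integrable M (\<lambda>\<omega>. \<bar>X \<omega>\<bar> ^ k)"
    proof (rule Bochner_Integration.integrable_bound)
      show "integrable M (\<lambda>\<omega>. 1 + \<bar>X \<omega>\<bar> ^ nat j)" using assms(10) by simp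
      show "AE \<omega> in M. norm (\<bar>X \<omega>\<bar> ^ k) \<le> norm (1 + \<bar>X \<omega>\<bar> ^ nat j)"
      proof (intro AE_I2)
        fix \<omega>
        have "\<bar>X \<omega>\<bar> ^ k \<le> 1 + \<bar>X \<omega>\<bar> ^ nat j"
        proof (cases "\<bar>X \<omega>\<bar> \<le> 1")
          case True
          then have "\<bar>X \<omega>\<bar> ^ k \<le> 1" by (simp add: power_le_one)
          moreover have "0 \<le> \<bar>X \<omega>\<bar> ^ nat j" by simp
          ultimately show ?thesis by linarith
        next
          case False
          then have "\<bar>X \<omega>\<bar> ^ k \<le> \<bar>X \<omega>\<bar> ^ nat j" using kj by (intro power_increasing) auto
          then show ?thesis by linarith
        qed
        then show "norm (\<bar>X \<omega>\<bar> ^ k) \<le> norm (1 + \<bar>X \<omega>\<bar> ^ nat j)" by simp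
      qed
    qed measurable
    then show ?thesis by simp
  qed
  define F where "F \<omega> t = exp_trunc j (Complex s t * complex_of_real (X \<omega>)) / Complex s t powr complex_of_real (p + 1)" for \<omega> t
  have Fm[measurable]: "(\<lambda>(\<omega>, t). F \<omega> t) \<in> borel_measurable (M \<Otimes>\<^sub>M lborel)"
    unfolding F_def exp_trunc_def using s by measurable
  define Cn where "Cn a = (LINT t|lborel. cmod (Complex s t) powr (- a))" for a
  define bnd where "bnd \<omega> t = exp (s * X \<omega>) * cmod (Complex s t) powr (- (p + 1))
      + (\<Sum>k<n0. \<bar>X \<omega>\<bar> ^ k / fact k * cmod (Complex s t) powr (- (p + 1 - real k)))" for \<omega> t
  have kp: "p + 1 - real k > 1" if "k < n0" for k
    using k_lt_p[OF j, of k] that unfolding n0_def by simp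
  have bndI: "integrable lborel (bnd \<omega>)" for \<omega>
    unfolding bnd_def
    using cnorm_integrable[OF _ s, of "p + 1"] p cnorm_integrable[OF kp s]
    by (intro Bochner_Integration.integrable_add Bochner_Integration.integrable_sum integrable_mult_right) auto
  have bndV: "(LINT t|lborel. bnd \<omega> t) = exp (s * X \<omega>) * Cn (p + 1) + (\<Sum>k<n0. \<bar>X \<omega>\<bar> ^ k / fact k * Cn (p + 1 - real k))" for \<omega>
    unfolding bnd_def Cn_def
    using cnorm_integrable[OF _ s, of "p + 1"] p cnorm_integrable[OF kp s]
    by (subst Bochner_Integration.integral_add) (auto intro!: Bochner_Integration.integrable_sum simp: Bochner_Integration.integral_sum)
  have Fbnd: "norm (F \<omega> t) \<le> bnd \<omega> t" for \<omega> t
  proof -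
    define z where "z = Complex s t"
    have zpos: "cmod z > 0" unfolding z_def using s by (simp add: Complex_nz)
    have nzq: "norm (z powr complex_of_real (p + 1)) = cmod z powr (p + 1)" by (rule norm_cpow)
    have "norm (F \<omega> t) = norm (exp_trunc j (z * complex_of_real (X \<omega>))) / cmod z powr (p + 1)"
      unfolding F_def z_def[symmetric] norm_divide nzq ..
    also have "\<dots> \<le> (exp (s * X \<omega>) + (\<Sum>k<n0. cmod z ^ k * (\<bar>X \<omega>\<bar> ^ k / fact k))) / cmod z powr (p + 1)"
      using norm_exp_trunc_bound[of j s t "X \<omega>"] zpos unfolding z_def n0_def
      by (intro divide_right_mono) auto
    also have "\<dots> = bnd \<omega> t"
    proof -
      have "cmod z ^ k / cmod z powr (p + 1) = cmod z powr (- (p + 1 - real k))" for k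
      proof -
        have "cmod z ^ k / cmod z powr (p + 1) = cmod z powr real k / cmod z powr (p + 1)"
          using zpos by (simp add: powr_realpow)
        also have "\<dots> = cmod z powr (real k - (p + 1))" by (rule powr_diff[symmetric])
        finally show ?thesis by simp
      qed
      note pw = this
      have e1: "(exp (s * X \<omega>) + (\<Sum>k<n0. cmod z ^ k * (\<bar>X \<omega>\<bar> ^ k / fact k))) / cmod z powr (p + 1)
          = exp (s * X \<omega>) * cmod z powr (- (p + 1)) + (\<Sum>k<n0. \<bar>X \<omega>\<bar> ^ k / fact k * (cmod z ^ k / cmod z powr (p + 1)))"
        unfolding powr_minus by (simp add: add_divide_distrib sum_distrib_left sum_distrib_right distrib_left distrib_right divide_inverse mult_ac)
      show ?thesis unfolding bnd_def z_def[symmetric] e1 pw ..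
    qed
    finally show ?thesis .
  qed
  have FtI: "integrable lborel (F \<omega>)" for \<omega>
    unfolding F_def using pointwise_trunc(1)[OF s p j] .
  have FtV: "(LINT t|lborel. F \<omega> t) = complex_of_real (2 * pi / Gamma (p + 1) * max 0 (X \<omega>) powr p)" for \<omega>
    unfolding F_def using pointwise_trunc(2)[OF s p j] by simp
  have FI: "integrable (M \<Otimes>\<^sub>M lborel) (\<lambda>(\<omega>, t). F \<omega> t)"
  proof (rule PS.Fubini_integrable)
    show "integrable M (\<lambda>\<omega>. LINT t|lborel. norm (case (\<omega>, t) of (\<omega>, t) \<Rightarrow> F \<omega> t))"
    proof (rule Bochner_Integration.integrable_bound)
      show "integrable M (\<lambda>\<omega>. exp (s * X \<omega>) * Cn (p + 1) + (\<Sum>k<n0. \<bar>X \<omega>\<bar> ^ k / fact k * Cn (p + 1 - real k)))"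
        using expI momI by (intro Bochner_Integration.integrable_add Bochner_Integration.integrable_sum integrable_mult_left) auto
      show "AE \<omega> in M. norm (LINT t|lborel. norm (case (\<omega>, t) of (\<omega>, t) \<Rightarrow> F \<omega> t))
          \<le> norm (exp (s * X \<omega>) * Cn (p + 1) + (\<Sum>k<n0. \<bar>X \<omega>\<bar> ^ k / fact k * Cn (p + 1 - real k)))"
      proof (intro AE_I2)
        fix \<omega>
        have "(LINT t|lborel. norm (F \<omega> t)) \<le> (LINT t|lborel. bnd \<omega> t)"
          using FtI bndI Fbnd by (intro integral_mono) auto
        moreover have "0 \<le> (LINT t|lborel. norm (F \<omega> t))" by simp
        ultimately show "norm (LINT t|lborel. norm (case (\<omega>, t) of (\<omega>, t) \<Rightarrow> F \<omega> t))
          \<le> norm (exp (s * X \<omega>) * Cn (p + 1) + (\<Sum>k<n0. \<bar>X \<omega>\<bar> ^ k / fact k * Cn (p + 1 - real k)))"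
          unfolding bndV by simp
      qed
    qed measurable
    show "AE \<omega> in M. integrable lborel (\<lambda>t. case (\<omega>, t) of (\<omega>, t) \<Rightarrow> F \<omega> t)"
      using FtI by simp
  qed (rule Fm)
  define num where "num t \<omega> = exp_trunc j (Complex s t * complex_of_real (X \<omega>))" for t \<omega>
  have numI: "integrable M (num t)" for t
  proof (rule Bochner_Integration.integrable_bound)
    show "integrable M (\<lambda>\<omega>. exp (s * X \<omega>) + (\<Sum>k<n0. cmod (Complex s t) ^ k * (\<bar>X \<omega>\<bar> ^ k / fact k)))"
      using expI momI by (intro Bochner_Integration.integrable_add Bochner_Integration.integrable_sum integrable_mult_right) auto
    show "AE \<omega> in M. norm (num t \<omega>) \<le> norm (exp (s * X \<omega>) + (\<Sum>k<n0. cmod (Complex s t) ^ k * (\<bar>X \<omega>\<bar> ^ k / fact k)))"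
    proof (intro AE_I2)
      fix \<omega>
      have "norm (num t \<omega>) \<le> exp (s * X \<omega>) + (\<Sum>k<n0. cmod (Complex s t) ^ k * (\<bar>X \<omega>\<bar> ^ k / fact k))"
        unfolding num_def n0_def by (rule norm_exp_trunc_bound)
      moreover have "0 \<le> exp (s * X \<omega>) + (\<Sum>k<n0. cmod (Complex s t) ^ k * (\<bar>X \<omega>\<bar> ^ k / fact k))"
        by (intro add_nonneg_nonneg sum_nonneg) auto
      ultimately show "norm (num t \<omega>) \<le> norm (exp (s * X \<omega>) + (\<Sum>k<n0. cmod (Complex s t) ^ k * (\<bar>X \<omega>\<bar> ^ k / fact k)))"
        by simp
    qed
  qed (unfold num_def exp_trunc_def, measurable)
  define Phi where "Phi t = (LINT \<omega>|M. num t \<omega>) / Complex s t powr complex_of_real (p + 1)" for t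
  have PhiF: "Phi t = (LINT \<omega>|M. F \<omega> t)" for t
    unfolding Phi_def F_def num_def by simp
  have PhiI: "integrable lborel Phi"
    unfolding PhiF[abs_def] using PS.integrable_snd[OF FI] by simp
  have swap: "(LINT t|lborel. Phi t) = (LINT \<omega>|M. LINT t|lborel. F \<omega> t)"
    unfolding PhiF using PS.Fubini_integral[OF FI] by simp
  have inner: "integrable M (\<lambda>\<omega>. complex_of_real (2 * pi / Gamma (p + 1) * max 0 (X \<omega>) powr p))"
    using PS.integrable_fst[OF FI] unfolding FtV by simp
  have XpI: "integrable M (\<lambda>\<omega>. max 0 (X \<omega>) powr p)"
  proof -
    have A: "integrable M (\<lambda>\<omega>. 2 * pi / Gamma (p + 1) * max 0 (X \<omega>) powr p)"
      using integrable_Re[OF inner] by (simp only: Re_complex_of_real)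
    have B: "integrable M (\<lambda>\<omega>. Gamma (p + 1) / (2 * pi) * (2 * pi / Gamma (p + 1) * max 0 (X \<omega>) powr p))"
      by (rule integrable_mult_right[OF A])
    have C: "(\<lambda>\<omega>. Gamma (p + 1) / (2 * pi) * (2 * pi / Gamma (p + 1) * max 0 (X \<omega>) powr p)) = (\<lambda>\<omega>. max 0 (X \<omega>) powr p)"
      using ga by (auto simp: field_simps)
    show ?thesis using B unfolding C .
  qed
  have EV: "(LINT t|lborel. Phi t) = complex_of_real (2 * pi / Gamma (p + 1) * (LINT \<omega>|M. max 0 (X \<omega>) powr p))"
    unfolding swap FtV by simp
  have main: "complex_of_real (LINT \<omega>|M. max 0 (X \<omega>) powr p) = complex_of_real (Gamma (p + 1) / (2 * pi)) * (LINT t|lborel. Phi t)"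
    unfolding EV using ga by (simp add: field_simps)
  have sym: "Phi (- t) = cnj (Phi t)" for t
  proof -
    have c1: "cnj (Complex s t) = Complex s (- t)" by (simp add: complex_eq_iff)
    have "cnj (LINT \<omega>|M. num t \<omega>) = (LINT \<omega>|M. num (- t) \<omega>)"
    proof -
      have "(\<lambda>\<omega>. cnj (num t \<omega>)) = num (- t)" by (rule ext) (simp add: num_def exp_trunc_cnj c1)
      moreover have "cnj (LINT \<omega>|M. num t \<omega>) = (LINT \<omega>|M. cnj (num t \<omega>))" by (rule Bochner_Integration.integral_cnj[symmetric])
      ultimately show ?thesis by simp
    qed
    moreover have "cnj (Complex s t powr complex_of_real (p + 1)) = Complex s (- t) powr complex_of_real (p + 1)"
      using s by (subst cnj_powr) (auto simp: c1)
    ultimately show ?thesis unfolding Phi_def by simp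
  qed
  have HL1: "set_integrable lborel {0..} (\<lambda>t. Re (Phi t))"
    by (rule half_line(1)[OF PhiI sym])
  have HL2: "(LINT t|lborel. Phi t) = complex_of_real (2 * (LBINT t:{0..}. Re (Phi t)))"
    by (rule half_line(2)[OF PhiI sym])
  have final: "(LINT \<omega>|M. max 0 (X \<omega>) powr p) = Gamma (p + 1) / pi * (LBINT t:{0..}. Re (Phi t))"
  proof -
    have "complex_of_real (LINT \<omega>|M. max 0 (X \<omega>) powr p) = complex_of_real (Gamma (p + 1) / (2 * pi) * (2 * (LBINT t:{0..}. Re (Phi t))))"
      using main unfolding HL2 by simp
    then have "(LINT \<omega>|M. max 0 (X \<omega>) powr p) = Gamma (p + 1) / (2 * pi) * (2 * (LBINT t:{0..}. Re (Phi t)))"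
      by (simp only: of_real_eq_iff)
    then show ?thesis by simp
  qed
  show ?thesis
    using XpI numI PhiI HL1 main final unfolding Phi_def num_def by simp
qed

end
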